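(* Let $\mathcal{A}$ be a primal algebra with universe $A$, let $<$ be a linear order on $A$, and let $\sqsubset$ denote the induced antilexicographic orders. Let $n,m$ be positive integers, $\pi$ a permutation of $\{1,\dots,n\}$ and $\sigma$ a permutation of $\{1,\dots,m\}$. A map $f:A^n\to A^m$ is a homomorphism from $\mathcal{A}^n_{\sqsubseteq_\pi}$ to $\mathcal{A}^m_{\sqsubseteq_\sigma}$ if and only if there exist $i_1,\dots,i_m\in\{1,\dots,n\}$ such that $f(x_1,\dots,x_n)=(x_{i_1},\dots,x_{i_m})$ for all $x_1,\dots,x_n\in A$ and the numbers $j_s=\pi^{-1}(i_{\sigma(s)})$, $s\in\{1,\dots,m\}$, satisfy: (i) $j_m=n$; and (ii) for every $s<m$, if $j_s=k<n$ then $\{k+1,\dots,n\}\subseteq\{j_{s+1},\dots,j_m\}$.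
   Context: A primal algebra is a finite algebra with at least two elements in which every finitary operation on its universe is a term operation. For a linear order $<$ on $A$ and a positive integer $n$, the antilexicographic order $\sqsubset$ on $A^n$ is: $(x_1,\dots,x_n)\sqsubset(y_1,\dots,y_n)$ iff there is $s$ with $x_t=y_t$ for all $t>s$ and $x_s<y_s$. For a permutation $\pi$ of $\{1,\dots,n\}$, $(x_1,\dots,x_n)\sqsubset_\pi(y_1,\dots,y_n)$ iff $(x_{\pi(1)},\dots,x_{\pi(n)})\sqsubset(y_{\pi(1)},\dots,y_{\pi(n)})$; $\sqsubseteq$ and $\sqsubseteq_\pi$ are the reflexive versions. $\mathcal{A}^n_{\sqsubseteq_\pi}$ is the direct power algebra $\mathcal{A}^n$ expanded by the relation $\sqsubseteq_\pi$. A homomorphism from $\mathcal{A}^n_{\sqsubseteq_\pi}$ to $\mathcal{A}^m_{\sqsubseteq_\sigma}$ is a map $A^n\to A^m$ that is an algebra homomorphism $\mathcal{A}^n\to\mathcal{A}^m$ and satisfies $\bar x\sqsubseteq_\pi\bar y\Rightarrow f(\bar x)\sqsubseteq_\sigma f(\bar y)$. *)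

theory Defs
  imports "HOL-Library.FuncSet" "HOL-Combinatorics.Permutations"
begin

definition is_algebra :: "'a set \<Rightarrow> (nat \<times> ('a list \<Rightarrow> 'a)) set \<Rightarrow> bool" where
  "is_algebra A ops \<longleftrightarrow> A \<noteq> {} \<and>
     (\<forall>(k, g) \<in> ops. \<forall>xs. length xs = k \<and> set xs \<subseteq> A \<longrightarrow> g xs \<in> A)"

inductive_set term_ops :: "(nat \<times> ('a list \<Rightarrow> 'a)) set \<Rightarrow> nat \<Rightarrow> ('a list \<Rightarrow> 'a) set"
  for ops :: "(nat \<times> ('a list \<Rightarrow> 'a)) set" and n :: nat where
  proj: "i < n \<Longrightarrow> (\<lambda>xs. xs ! i) \<in> term_ops ops n"
| app: "(k, g) \<in> ops \<Longrightarrow> length ts = k \<Longrightarrow> (\<forall>t \<in> set ts. t \<in> term_ops ops n)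
        \<Longrightarrow> (\<lambda>xs. g (map (\<lambda>t. t xs) ts)) \<in> term_ops ops n"

definition primal :: "'a set \<Rightarrow> (nat \<times> ('a list \<Rightarrow> 'a)) set \<Rightarrow> bool" where
  "primal A ops \<longleftrightarrow> is_algebra A ops \<and> finite A \<and> card A \<ge> 2 \<and>
     (\<forall>n \<ge> 1. \<forall>h. (\<forall>xs. length xs = n \<and> set xs \<subseteq> A \<longrightarrow> h xs \<in> A) \<longrightarrow>
        (\<exists>t \<in> term_ops ops n. \<forall>xs. length xs = n \<and> set xs \<subseteq> A \<longrightarrow> t xs = h xs))"

abbreviation tuples :: "'a set \<Rightarrow> nat \<Rightarrow> (nat \<Rightarrow> 'a) set" where
  "tuples A n \<equiv> PiE {1..n} (\<lambda>_. A)"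

definition power_op :: "nat \<Rightarrow> ('a list \<Rightarrow> 'a) \<Rightarrow> (nat \<Rightarrow> 'a) list \<Rightarrow> (nat \<Rightarrow> 'a)" where
  "power_op n g xs = (\<lambda>t \<in> {1..n}. g (map (\<lambda>x. x t) xs))"

definition antilex_less :: "'a rel \<Rightarrow> nat \<Rightarrow> (nat \<Rightarrow> 'a) \<Rightarrow> (nat \<Rightarrow> 'a) \<Rightarrow> bool" where
  "antilex_less r n x y \<longleftrightarrow>
     (\<exists>s \<in> {1..n}. (\<forall>t \<in> {s<..n}. x t = y t) \<and> (x s, y s) \<in> r)"

definition antilex_less_perm :: "'a rel \<Rightarrow> nat \<Rightarrow> (nat \<Rightarrow> nat) \<Rightarrow> (nat \<Rightarrow> 'a) \<Rightarrow> (nat \<Rightarrow> 'a) \<Rightarrow> bool" where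
  "antilex_less_perm r n \<pi> x y \<longleftrightarrow> antilex_less r n (x \<circ> \<pi>) (y \<circ> \<pi>)"

definition antilex_le_perm :: "'a rel \<Rightarrow> nat \<Rightarrow> (nat \<Rightarrow> nat) \<Rightarrow> (nat \<Rightarrow> 'a) \<Rightarrow> (nat \<Rightarrow> 'a) \<Rightarrow> bool" where
  "antilex_le_perm r n \<pi> x y \<longleftrightarrow> x = y \<or> antilex_less_perm r n \<pi> x y"

definition is_hom ::
  "'a set \<Rightarrow> (nat \<times> ('a list \<Rightarrow> 'a)) set \<Rightarrow> 'a rel \<Rightarrow> nat \<Rightarrow> (nat \<Rightarrow> nat) \<Rightarrow> nat \<Rightarrow> (nat \<Rightarrow> nat)
     \<Rightarrow> ((nat \<Rightarrow> 'a) \<Rightarrow> (nat \<Rightarrow> 'a)) \<Rightarrow> bool" where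
  "is_hom A ops r n \<pi> m \<sigma> f \<longleftrightarrow>
     (\<forall>x \<in> tuples A n. f x \<in> tuples A m) \<and>
     (\<forall>(k, g) \<in> ops. \<forall>xs. length xs = k \<and> set xs \<subseteq> tuples A n \<longrightarrow>
         f (power_op n g xs) = power_op m g (map f xs)) \<and>
     (\<forall>x \<in> tuples A n. \<forall>y \<in> tuples A n.
         antilex_le_perm r n \<pi> x y \<longrightarrow> antilex_le_perm r m \<sigma> (f x) (f y))"

end

theory Submission
  imports Defs
begin


lemma term_ops_closed:
  assumes alg: "is_algebra A ops"
  shows "t \<in> term_ops ops k \<Longrightarrow> length ys = k \<Longrightarrow> set ys \<subseteq> A \<Longrightarrow> t ys \<in> A"
proof (induction t rule: term_ops.induct)
  case (proj i)
  then show ?case by auto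
next
  case (app kk g ts)
  have "set (map (\<lambda>t. t ys) ts) \<subseteq> A" using app by auto
  then show ?case using alg app unfolding is_algebra_def by fastforce
qed

lemma power_op_in:
  assumes "\<forall>ys. length ys = k \<and> set ys \<subseteq> A \<longrightarrow> g ys \<in> A"
    and "length xs = k" and "set xs \<subseteq> tuples A n"
  shows "power_op n g xs \<in> tuples A n"
proof -
  have "\<And>i. i \<in> {1..n} \<Longrightarrow> set (map (\<lambda>x. x i) xs) \<subseteq> A"
    using assms(3) by (auto simp: PiE_iff)
  then show ?thesis using assms unfolding power_op_def by (auto simp: PiE_iff)
qed

lemma hom_term_ops:
  assumes alg: "is_algebra A ops"
    and H1: "\<forall>x \<in> tuples A n. f x \<in> tuples A m"
    and H2: "\<forall>(k, g) \<in> ops. \<forall>xs. length xs = k \<and> set xs \<subseteq> tuples A n \<longrightarrow>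
         f (power_op n g xs) = power_op m g (map f xs)"
  shows "t \<in> term_ops ops k \<Longrightarrow> length xs = k \<Longrightarrow> set xs \<subseteq> tuples A n
         \<Longrightarrow> f (power_op n t xs) = power_op m t (map f xs)"
proof (induction t rule: term_ops.induct)
  case (proj i)
  have xi: "xs ! i \<in> tuples A n" using proj by (metis nth_mem subsetD)
  have "power_op n (\<lambda>xs. xs ! i) xs = xs ! i"
    using xi proj unfolding power_op_def by (auto simp: PiE_iff extensional_def)
  moreover have "f (xs ! i) \<in> tuples A m" using H1 xi by auto
  moreover have "power_op m (\<lambda>xs. xs ! i) (map f xs) = f (xs ! i)"
    using calculation proj unfolding power_op_def by (auto simp: PiE_iff extensional_def)
  ultimately show ?case by simp
next
  case (app kk g ts)
  define ps where "ps = map (\<lambda>t. power_op n t xs) ts"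
  have eq1: "power_op n (\<lambda>xs. g (map (\<lambda>t. t xs) ts)) xs = power_op n g ps"
    unfolding ps_def power_op_def by (auto simp: comp_def)
  have ps_in: "set ps \<subseteq> tuples A n"
  proof
    fix p assume "p \<in> set ps"
    then obtain t where t: "t \<in> set ts" "p = power_op n t xs" unfolding ps_def by auto
    have "t \<in> term_ops ops k" using app t by auto
    then have "\<forall>ys. length ys = k \<and> set ys \<subseteq> A \<longrightarrow> t ys \<in> A"
      using term_ops_closed[OF alg] by blast
    then show "p \<in> tuples A n" using t app power_op_in[of k A t xs n] by auto
  qed
  have "f (power_op n g ps) = power_op m g (map f ps)"
    using H2 app ps_in unfolding ps_def by auto
  also have "map f ps = map (\<lambda>t. power_op m t (map f xs)) ts"
    unfolding ps_def using app by auto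
  also have "power_op m g (map (\<lambda>t. power_op m t (map f xs)) ts)
      = power_op m (\<lambda>xs. g (map (\<lambda>t. t xs) ts)) (map f xs)"
    unfolding power_op_def by (auto simp: comp_def)
  finally show ?case using eq1 by simp
qed



lemma hom_all_ops:
  assumes pr: "primal A ops"
    and H1: "\<forall>x \<in> tuples A n. f x \<in> tuples A m"
    and H2: "\<forall>(k, g) \<in> ops. \<forall>xs. length xs = k \<and> set xs \<subseteq> tuples A n \<longrightarrow>
         f (power_op n g xs) = power_op m g (map f xs)"
    and k: "k \<ge> 1" and h: "\<forall>ys. length ys = k \<and> set ys \<subseteq> A \<longrightarrow> h ys \<in> A"
    and xs: "length xs = k" "set xs \<subseteq> tuples A n"
  shows "f (power_op n h xs) = power_op m h (map f xs)"
proof -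
  have alg: "is_algebra A ops" using pr unfolding primal_def by auto
  obtain t where t: "t \<in> term_ops ops k" "\<forall>ys. length ys = k \<and> set ys \<subseteq> A \<longrightarrow> t ys = h ys"
    using pr k h unfolding primal_def by blast
  have e1: "power_op n h xs = power_op n t xs"
  proof -
    have "\<And>i. i \<in> {1..n} \<Longrightarrow> set (map (\<lambda>x. x i) xs) \<subseteq> A"
      using xs by (auto simp: PiE_iff)
    then show ?thesis using t xs unfolding power_op_def by (auto intro!: ext)
  qed
  have fxs: "set (map f xs) \<subseteq> tuples A m" using H1 xs by auto
  have e2: "power_op m h (map f xs) = power_op m t (map f xs)"
  proof -
    have "\<And>i. i \<in> {1..m} \<Longrightarrow> set (map (\<lambda>x. x i) (map f xs)) \<subseteq> A"
      using fxs by (force simp: PiE_iff)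
    then show ?thesis using t xs unfolding power_op_def by (auto intro!: ext)
  qed
  show ?thesis using hom_term_ops[OF alg H1 H2 t(1) xs] e1 e2 by simp
qed

lemma two_elems: assumes "finite A" "card A \<ge> 2" obtains a b where "a \<in> A" "b \<in> A" "a \<noteq> b"
proof -
  have "\<not> card A \<le> Suc 0" using assms by simp
  then have "\<exists>a\<in>A. \<exists>b\<in>A. a \<noteq> b" using card_le_Suc0_iff_eq[OF assms(1)] by blast
  then show ?thesis using that by blast
qed

lemma hom_coord:
  assumes pr: "primal A ops"
    and H1: "\<forall>x \<in> tuples A n. f x \<in> tuples A m"
    and H2: "\<forall>(k, g) \<in> ops. \<forall>xs. length xs = k \<and> set xs \<subseteq> tuples A n \<longrightarrow>
         f (power_op n g xs) = power_op m g (map f xs)"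
    and n: "n \<ge> 1" and s: "s \<in> {1..m}"
  shows "\<exists>i \<in> {1..n}. \<forall>x \<in> tuples A n. f x s = x i"
proof (rule ccontr)
  assume "\<not> ?thesis"
  then have "\<forall>i \<in> {1..n}. \<exists>x. x \<in> tuples A n \<and> f x s \<noteq> x i" by auto
  then obtain X where X: "\<And>i. i \<in> {1..n} \<Longrightarrow> X i \<in> tuples A n \<and> f (X i) s \<noteq> X i i"
    by metis
  obtain e0 e1 where e: "e0 \<in> A" "e1 \<in> A" "e0 \<noteq> e1"
    using pr two_elems unfolding primal_def by metis
  define xs where "xs = map X [1..<n+1]"
  have len: "length xs = n" unfolding xs_def by simp
  have xsA: "set xs \<subseteq> tuples A n"
  proof
    fix x assume "x \<in> set xs"
    then have "x \<in> X ` {1..<n+1}" unfolding xs_def by (simp only: set_map set_upt)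
    then obtain i where i: "i \<in> {1..<n+1}" "x = X i" by blast
    then have "i \<in> {1..n}" by auto
    then show "x \<in> tuples A n" using X i by blast
  qed
  define b where "b = map (\<lambda>x. f x s) xs"
  define g where "g = (\<lambda>v. if v = b then e1 else e0)"
  define g' where "g' = (\<lambda>v::'a list. e0)"
  have gA: "\<forall>ys. length ys = n \<and> set ys \<subseteq> A \<longrightarrow> g ys \<in> A" unfolding g_def using e by auto
  have g'A: "\<forall>ys. length ys = n \<and> set ys \<subseteq> A \<longrightarrow> g' ys \<in> A" unfolding g'_def using e by auto
  have neq: "map (\<lambda>x. x i) xs \<noteq> b" if i: "i \<in> {1..n}" for i
  proof
    assume "map (\<lambda>x. x i) xs = b"
    then have "map (\<lambda>x. x i) xs ! (i - 1) = b ! (i - 1)" by simp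
    moreover have "xs ! (i - 1) = X i" unfolding xs_def using i by (subst nth_map) (auto simp del: upt_Suc)
    moreover have "i - 1 < n" using i by auto
    ultimately have "X i i = f (X i) s" unfolding b_def using len by simp
    then show False using X i by metis
  qed
  have peq: "power_op n g xs = power_op n g' xs"
    unfolding power_op_def g_def g'_def using neq by (auto intro!: ext)
  have h1: "f (power_op n g xs) = power_op m g (map f xs)"
    using hom_all_ops[OF pr H1 H2 n gA len xsA] .
  have "power_op m g (map f xs) s = g b"
    using s unfolding power_op_def b_def by (simp add: comp_def)
  then have "f (power_op n g xs) s = e1" using h1 unfolding g_def by simp
  moreover have "f (power_op n g' xs) s = e0"
  proof -
    have h2: "f (power_op n g' xs) = power_op m g' (map f xs)"
      using hom_all_ops[OF pr H1 H2 n g'A len xsA] .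
    have "power_op m g' (map f xs) s = e0" using s unfolding power_op_def g'_def by simp
    then show ?thesis using h2 by simp
  qed
  ultimately show False using peq e by simp
qed



definition LE :: "'a rel \<Rightarrow> nat \<Rightarrow> (nat \<Rightarrow> 'a) \<Rightarrow> (nat \<Rightarrow> 'a) \<Rightarrow> bool" where
  "LE r n u v \<longleftrightarrow> (\<forall>t\<in>{1..n}. u t = v t) \<or> antilex_less r n u v"

lemma antilex_cong:
  assumes "\<forall>t\<in>{1..n}. u t = u' t" "\<forall>t\<in>{1..n}. v t = v' t"
  shows "antilex_less r n u v = antilex_less r n u' v'"
proof -
  have "\<And>s. s \<in> {1..n} \<Longrightarrow> ((\<forall>t\<in>{s<..n}. u t = v t) \<and> (u s, v s) \<in> r) = ((\<forall>t\<in>{s<..n}. u' t = v' t) \<and> (u' s, v' s) \<in> r)"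
  proof -
    fix s assume s: "s \<in> {1..n}"
    have "\<And>t. t \<in> {s<..n} \<Longrightarrow> t \<in> {1..n}" using s by auto
    then show "?thesis s" using assms s by auto
  qed
  then show ?thesis unfolding antilex_less_def by (rule bex_cong[OF refl])
qed

lemma LE_cong:
  assumes "\<forall>t\<in>{1..n}. u t = u' t" "\<forall>t\<in>{1..n}. v t = v' t"
  shows "LE r n u v = LE r n u' v'"
  unfolding LE_def using antilex_cong[OF assms] assms by auto

lemma comb_suff:
  assumes irr: "irrefl r"
    and jr: "j ` {1..m} \<subseteq> {1..n}" and jm: "j m = n"
    and ii: "\<forall>s \<in> {1..<m}. j s < n \<longrightarrow> {j s + 1..n} \<subseteq> j ` {s + 1..m}"
    and less: "antilex_less r n u v"
  shows "LE r m (u \<circ> j) (v \<circ> j)"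
proof (cases "\<forall>s\<in>{1..m}. u (j s) = v (j s)")
  case True
  then show ?thesis unfolding LE_def by simp
next
  case False
  define S where "S = {s\<in>{1..m}. u (j s) \<noteq> v (j s)}"
  have fin: "finite S" unfolding S_def by simp
  have ne: "S \<noteq> {}" using False unfolding S_def by auto
  define s0 where "s0 = Max S"
  have s0S: "s0 \<in> S" unfolding s0_def using fin ne by simp
  have s0max: "\<And>s. s \<in> S \<Longrightarrow> s \<le> s0" unfolding s0_def using fin by simp
  obtain p where p: "p \<in> {1..n}" "\<forall>t\<in>{p<..n}. u t = v t" "(u p, v p) \<in> r"
    using less unfolding antilex_less_def by blast
  have "s0 \<in> {1..m}" using s0S unfolding S_def by auto
  then have js0: "j s0 \<in> {1..n}" using jr by blast
  have "j s0 \<le> p"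
  proof (rule ccontr)
    assume "\<not> j s0 \<le> p"
    then have "u (j s0) = v (j s0)" using p js0 by auto
    then show False using s0S unfolding S_def by auto
  qed
  moreover have "\<not> j s0 < p"
  proof
    assume lt: "j s0 < p"
    have "s0 \<noteq> m" using lt jm p by auto
    then have "s0 \<in> {1..<m}" using s0S unfolding S_def by auto
    moreover have "j s0 < n" using lt p by auto
    ultimately have "{j s0 + 1..n} \<subseteq> j ` {s0 + 1..m}" using ii by blast
    moreover have "p \<in> {j s0 + 1..n}" using lt p by auto
    ultimately have "p \<in> j ` {s0 + 1..m}" by blast
    then obtain s' where s': "s' \<in> {s0+1..m}" "p = j s'" by auto
    have "s' \<notin> S" using s0max s' by fastforce
    then have "u p = v p" using s' unfolding S_def by auto
    then show False using p irr unfolding irrefl_def by auto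
  qed
  ultimately have "j s0 = p" by simp
  moreover have "\<forall>t\<in>{s0<..m}. (u \<circ> j) t = (v \<circ> j) t"
  proof
    fix t assume t: "t \<in> {s0<..m}"
    then have "t \<notin> S" using s0max by fastforce
    then show "(u \<circ> j) t = (v \<circ> j) t" using t s0S unfolding S_def by auto
  qed
  ultimately have "antilex_less r m (u \<circ> j) (v \<circ> j)"
    unfolding antilex_less_def using s0S p unfolding S_def by auto
  then show ?thesis unfolding LE_def by simp
qed

lemma comb_nec:
  assumes slo: "strict_linear_order_on A r"
    and ab: "a \<in> A" "b \<in> A" "(a, b) \<in> r"
    and jr: "j ` {1..m} \<subseteq> {1..n}" and m: "m \<ge> 1"
    and pres: "\<And>u v. \<forall>t\<in>{1..n}. u t \<in> A \<Longrightarrow> \<forall>t\<in>{1..n}. v t \<in> A \<Longrightarrow>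
                 antilex_less r n u v \<Longrightarrow> LE r m (u \<circ> j) (v \<circ> j)"
  shows "j m = n \<and> (\<forall>s \<in> {1..<m}. j s < n \<longrightarrow> {j s + 1..n} \<subseteq> j ` {s + 1..m})"
proof -
  have irr: "irrefl r" and tr: "trans r" using slo unfolding strict_linear_order_on_def by auto
  have ba: "(b, a) \<notin> r" using irr tr ab unfolding irrefl_def trans_def by blast
  have anb: "a \<noteq> b" using irr ab unfolding irrefl_def by auto
  have "m \<in> {1..m}" using m by simp
  then have jm: "j m \<in> {1..n}" using jr by blast
  have p1: "j m = n"
  proof (rule ccontr)
    assume ne: "j m \<noteq> n"
    define k where "k = j m"
    define u where "u = (\<lambda>t. if t = n then a else if t = k then b else a)"
    define v where "v = (\<lambda>t. if t = n then b else if t = k then a else a)"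
    have uA: "\<forall>t\<in>{1..n}. u t \<in> A" and vA: "\<forall>t\<in>{1..n}. v t \<in> A"
      unfolding u_def v_def using ab by auto
    have "(u n, v n) \<in> r" using ab(3) by (simp add: u_def v_def)
    moreover have "n \<in> {1..n}" using jm by auto
    moreover have "\<forall>t\<in>{n<..n}. u t = v t" by simp
    ultimately have "antilex_less r n u v" unfolding antilex_less_def by blast
    then have le: "LE r m (u \<circ> j) (v \<circ> j)" using pres uA vA by blast
    have uk: "u (j m) = b" "v (j m) = a" using ne unfolding u_def v_def k_def by auto
    have "\<not> (\<forall>t\<in>{1..m}. (u \<circ> j) t = (v \<circ> j) t)"
    proof
      assume "\<forall>t\<in>{1..m}. (u \<circ> j) t = (v \<circ> j) t"
      then have "(u \<circ> j) m = (v \<circ> j) m" using \<open>m \<in> {1..m}\<close> by blast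
      then show False using uk anb by simp
    qed
    then have "antilex_less r m (u \<circ> j) (v \<circ> j)" using le unfolding LE_def by blast
    then obtain s where s: "s \<in> {1..m}" "\<forall>t\<in>{s<..m}. (u \<circ> j) t = (v \<circ> j) t"
        "((u \<circ> j) s, (v \<circ> j) s) \<in> r"
      unfolding antilex_less_def by blast
    have "s = m"
    proof (rule ccontr)
      assume "s \<noteq> m" then have "m \<in> {s<..m}" using s by auto
      then have "(u \<circ> j) m = (v \<circ> j) m" using s(2) by blast
      then show False using uk anb by simp
    qed
    then show False using s uk ba by auto
  qed
  have p2: "\<forall>s \<in> {1..<m}. j s < n \<longrightarrow> {j s + 1..n} \<subseteq> j ` {s + 1..m}"
  proof (intro ballI impI subsetI)
    fix s p assume s: "s \<in> {1..<m}" and kn: "j s < n" and p: "p \<in> {j s + 1..n}"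
    show "p \<in> j ` {s + 1..m}"
    proof (rule ccontr)
      assume np: "p \<notin> j ` {s + 1..m}"
      define k where "k = j s"
      define u where "u = (\<lambda>t. if t = p then a else if t = k then b else a)"
      define v where "v = (\<lambda>t. if t = p then b else a)"
      have uA: "\<forall>t\<in>{1..n}. u t \<in> A" and vA: "\<forall>t\<in>{1..n}. v t \<in> A"
        unfolding u_def v_def using ab by auto
      have kp: "k < p" using p unfolding k_def by auto
      have "(u p, v p) \<in> r" using ab(3) by (simp add: u_def v_def)
      moreover have "p \<in> {1..n}" using p by auto
      moreover have "\<forall>t\<in>{p<..n}. u t = v t" using kp by (auto simp: u_def v_def)
      ultimately have "antilex_less r n u v" unfolding antilex_less_def by blast
      then have le: "LE r m (u \<circ> j) (v \<circ> j)" using pres uA vA by blast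
      have uk: "u (j s) = b" "v (j s) = a" using kp unfolding u_def v_def k_def by auto
      have "s \<in> {1..m}" using s by auto
      have "\<not> (\<forall>t\<in>{1..m}. (u \<circ> j) t = (v \<circ> j) t)"
      proof
        assume "\<forall>t\<in>{1..m}. (u \<circ> j) t = (v \<circ> j) t"
        then have "(u \<circ> j) s = (v \<circ> j) s" using \<open>s \<in> {1..m}\<close> by blast
        then show False using uk anb by simp
      qed
      then have "antilex_less r m (u \<circ> j) (v \<circ> j)" using le unfolding LE_def by blast
      then obtain s' where s': "s' \<in> {1..m}" "\<forall>t\<in>{s'<..m}. (u \<circ> j) t = (v \<circ> j) t"
          "((u \<circ> j) s', (v \<circ> j) s') \<in> r"
        unfolding antilex_less_def by blast
      have "\<not> s' < s"
      proof
        assume "s' < s" then have "s \<in> {s'<..m}" using s by auto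
        then have "(u \<circ> j) s = (v \<circ> j) s" using s'(2) by blast
        then show False using uk anb by simp
      qed
      moreover have "s' \<noteq> s" using s' uk ba by auto
      ultimately have "s' > s" by simp
      then have "s' \<in> {s+1..m}" using s'(1) by auto
      then have "j s' \<in> j ` {s+1..m}" by (rule imageI)
      then have jp: "j s' \<noteq> p" using np by metis
      have ur: "(u (j s'), v (j s')) \<in> r" using s'(3) by simp
      show False
      proof (cases "j s' = k")
        case True
        then have "u (j s') = b" "v (j s') = a" using jp unfolding u_def v_def by auto
        then show False using ur ba by simp
      next
        case False
        then have "u (j s') = a" "v (j s') = a" using jp unfolding u_def v_def by auto
        then show False using ur irr unfolding irrefl_def by simp
      qed
    qed
  qed
  show ?thesis using p1 p2 by simp
qed



lemma perm_ext_eq: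
  assumes g: "g permutes {1..n}" and x: "x \<in> tuples A n" and y: "y \<in> tuples A n"
  shows "(x = y) \<longleftrightarrow> (\<forall>t\<in>{1..n}. x (g t) = y (g t))"
proof
  assume H: "\<forall>t\<in>{1..n}. x (g t) = y (g t)"
  show "x = y"
  proof (rule ext)
    fix t show "x t = y t"
    proof (cases "t \<in> {1..n}")
      case True
      have "inv g t \<in> {1..n}" using True permutes_in_image[OF permutes_inv[OF g]] by blast
      then have "x (g (inv g t)) = y (g (inv g t))" using H by blast
      then show ?thesis using permutes_inverses(1)[OF g] by simp
    next
      case False
      then show ?thesis using PiE_arb[OF x False] PiE_arb[OF y False] by simp
    qed
  qed
next
  assume "x = y" then show "\<forall>t\<in>{1..n}. x (g t) = y (g t)" by simp
qed

lemma le_perm_iff: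
  assumes g: "g permutes {1..n}" and x: "x \<in> tuples A n" and y: "y \<in> tuples A n"
  shows "antilex_le_perm r n g x y \<longleftrightarrow> LE r n (x \<circ> g) (y \<circ> g)"
  unfolding antilex_le_perm_def antilex_less_perm_def LE_def
  using perm_ext_eq[OF g x y] by simp

lemma fle_iff:
  assumes \<pi>: "\<pi> permutes {1..n}" and \<sigma>: "\<sigma> permutes {1..m}"
    and i: "\<forall>s \<in> {1..m}. i s \<in> {1..n}"
    and f: "\<forall>x \<in> tuples A n. f x = (\<lambda>s \<in> {1..m}. x (i s))"
    and x: "x \<in> tuples A n" and y: "y \<in> tuples A n"
  shows "antilex_le_perm r m \<sigma> (f x) (f y) \<longleftrightarrow>
     LE r m (x \<circ> \<pi> \<circ> (\<lambda>s. inv \<pi> (i (\<sigma> s)))) (y \<circ> \<pi> \<circ> (\<lambda>s. inv \<pi> (i (\<sigma> s))))"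
proof -
  have fx: "f x \<in> tuples A m" using f x i by (auto simp: PiE_iff)
  have fy: "f y \<in> tuples A m" using f y i by (auto simp: PiE_iff)
  have cx: "\<forall>s\<in>{1..m}. (f x \<circ> \<sigma>) s = (x \<circ> \<pi> \<circ> (\<lambda>s. inv \<pi> (i (\<sigma> s)))) s"
  proof
    fix s assume s: "s \<in> {1..m}"
    then have "\<sigma> s \<in> {1..m}" using permutes_in_image[OF \<sigma>] by blast
    then show "(f x \<circ> \<sigma>) s = (x \<circ> \<pi> \<circ> (\<lambda>s. inv \<pi> (i (\<sigma> s)))) s"
      using f x permutes_inverses(1)[OF \<pi>] by simp
  qed
  have cy: "\<forall>s\<in>{1..m}. (f y \<circ> \<sigma>) s = (y \<circ> \<pi> \<circ> (\<lambda>s. inv \<pi> (i (\<sigma> s)))) s"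
  proof
    fix s assume s: "s \<in> {1..m}"
    then have "\<sigma> s \<in> {1..m}" using permutes_in_image[OF \<sigma>] by blast
    then show "(f y \<circ> \<sigma>) s = (y \<circ> \<pi> \<circ> (\<lambda>s. inv \<pi> (i (\<sigma> s)))) s"
      using f y permutes_inverses(1)[OF \<pi>] by simp
  qed
  show ?thesis using le_perm_iff[OF \<sigma> fx fy] LE_cong[OF cx cy] by (simp add: o_def)
qed



theorem lemma4p1:
  fixes A :: "'a set" and ops :: "(nat \<times> ('a list \<Rightarrow> 'a)) set" and r :: "'a rel"
    and n m :: nat and \<pi> \<sigma> :: "nat \<Rightarrow> nat" and f :: "(nat \<Rightarrow> 'a) \<Rightarrow> (nat \<Rightarrow> 'a)"
  assumes "primal A ops"
    and "strict_linear_order_on A r"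
    and "n \<ge> 1" and "m \<ge> 1"
    and "\<pi> permutes {1..n}" and "\<sigma> permutes {1..m}"
  shows "is_hom A ops r n \<pi> m \<sigma> f \<longleftrightarrow>
    (\<exists>i :: nat \<Rightarrow> nat. (\<forall>s \<in> {1..m}. i s \<in> {1..n}) \<and>
       (\<forall>x \<in> tuples A n. f x = (\<lambda>s \<in> {1..m}. x (i s))) \<and>
       (let j = (\<lambda>s. inv \<pi> (i (\<sigma> s))) in
          j m = n \<and>
          (\<forall>s \<in> {1..<m}. j s < n \<longrightarrow> {j s + 1..n} \<subseteq> j ` {s + 1..m})))"
proof -
  note pr = assms(1) and slo = assms(2) and n = assms(3) and m = assms(4)
    and \<pi> = assms(5) and \<sigma> = assms(6)
  have alg: "is_algebra A ops" using pr unfolding primal_def by auto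
  have irr: "irrefl r" using slo unfolding strict_linear_order_on_def by auto
  have jr: "(\<lambda>s. inv \<pi> (i (\<sigma> s))) ` {1..m} \<subseteq> {1..n}" if i: "\<forall>s \<in> {1..m}. i s \<in> {1..n}" for i
  proof
    fix z assume "z \<in> (\<lambda>s. inv \<pi> (i (\<sigma> s))) ` {1..m}"
    then obtain s where s: "s \<in> {1..m}" "z = inv \<pi> (i (\<sigma> s))" by auto
    have "\<sigma> s \<in> {1..m}" using s permutes_in_image[OF \<sigma>] by blast
    then have "i (\<sigma> s) \<in> {1..n}" using i by blast
    then show "z \<in> {1..n}" using s permutes_in_image[OF permutes_inv[OF \<pi>]] by blast
  qed
  show ?thesis
  proof
    assume hom: "is_hom A ops r n \<pi> m \<sigma> f"
    have H1: "\<forall>x \<in> tuples A n. f x \<in> tuples A m" using hom unfolding is_hom_def by blast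
    have H2: "\<forall>(k, g) \<in> ops. \<forall>xs. length xs = k \<and> set xs \<subseteq> tuples A n \<longrightarrow>
         f (power_op n g xs) = power_op m g (map f xs)" using hom unfolding is_hom_def by blast
    have H3: "\<forall>x \<in> tuples A n. \<forall>y \<in> tuples A n.
         antilex_le_perm r n \<pi> x y \<longrightarrow> antilex_le_perm r m \<sigma> (f x) (f y)"
      using hom unfolding is_hom_def by blast
    have "\<forall>s\<in>{1..m}. \<exists>i \<in> {1..n}. \<forall>x \<in> tuples A n. f x s = x i"
      using hom_coord[OF pr H1 H2 n] by blast
    then obtain i where i: "\<forall>s\<in>{1..m}. i s \<in> {1..n} \<and> (\<forall>x \<in> tuples A n. f x s = x (i s))"
      by metis
    have iin: "\<forall>s \<in> {1..m}. i s \<in> {1..n}" using i by blast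
    have fi: "\<forall>x \<in> tuples A n. f x = (\<lambda>s \<in> {1..m}. x (i s))"
    proof
      fix x assume x: "x \<in> tuples A n"
      have fx: "f x \<in> tuples A m" using H1 x by blast
      show "f x = (\<lambda>s \<in> {1..m}. x (i s))"
      proof (rule ext)
        fix s show "f x s = (\<lambda>s \<in> {1..m}. x (i s)) s"
        proof (cases "s \<in> {1..m}")
          case True then show ?thesis using i x by simp
        next
          case False then show ?thesis using PiE_arb[OF fx False] False by auto
        qed
      qed
    qed
    define j where "j = (\<lambda>s. inv \<pi> (i (\<sigma> s)))"
    obtain a0 b0 where ab0: "a0 \<in> A" "b0 \<in> A" "a0 \<noteq> b0"
      using pr two_elems unfolding primal_def by metis
    obtain a b where ab: "a \<in> A" "b \<in> A" "(a, b) \<in> r"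
    proof (cases "(a0, b0) \<in> r")
      case True then show ?thesis using that ab0 by blast
    next
      case False
      then have "(b0, a0) \<in> r" using slo ab0 unfolding strict_linear_order_on_def total_on_def by blast
      then show ?thesis using that ab0 by blast
    qed
    have pres: "LE r m (u \<circ> j) (v \<circ> j)"
      if uA: "\<forall>t\<in>{1..n}. u t \<in> A" and vA: "\<forall>t\<in>{1..n}. v t \<in> A"
        and less: "antilex_less r n u v" for u v
    proof -
      define x where "x = (\<lambda>t \<in> {1..n}. u (inv \<pi> t))"
      define y where "y = (\<lambda>t \<in> {1..n}. v (inv \<pi> t))"
      have invin: "\<And>t. t \<in> {1..n} \<Longrightarrow> inv \<pi> t \<in> {1..n}"
        using permutes_in_image[OF permutes_inv[OF \<pi>]] by blast
      have pin: "\<And>t. t \<in> {1..n} \<Longrightarrow> \<pi> t \<in> {1..n}"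
        using permutes_in_image[OF \<pi>] by blast
      have x: "x \<in> tuples A n" unfolding x_def using uA invin by auto
      have y: "y \<in> tuples A n" unfolding y_def using vA invin by auto
      have cx: "\<forall>t\<in>{1..n}. u t = (x \<circ> \<pi>) t"
        unfolding x_def using pin permutes_inverses(2)[OF \<pi>] by simp
      have cy: "\<forall>t\<in>{1..n}. v t = (y \<circ> \<pi>) t"
        unfolding y_def using pin permutes_inverses(2)[OF \<pi>] by simp
      have "LE r n u v" using less unfolding LE_def by blast
      then have "LE r n (x \<circ> \<pi>) (y \<circ> \<pi>)" using LE_cong[OF cx cy] by (simp add: o_def)
      then have "antilex_le_perm r n \<pi> x y" using le_perm_iff[OF \<pi> x y] by (simp add: o_def)
      then have "antilex_le_perm r m \<sigma> (f x) (f y)" using H3 x y by blast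
      then have le: "LE r m (x \<circ> \<pi> \<circ> j) (y \<circ> \<pi> \<circ> j)"
        using fle_iff[OF \<pi> \<sigma> iin fi x y] unfolding j_def by simp
      have jin: "\<And>s. s \<in> {1..m} \<Longrightarrow> j s \<in> {1..n}" using jr[OF iin] unfolding j_def by blast
      have c2x: "\<forall>s\<in>{1..m}. (x \<circ> \<pi> \<circ> j) s = (u \<circ> j) s" using cx jin by simp
      have c2y: "\<forall>s\<in>{1..m}. (y \<circ> \<pi> \<circ> j) s = (v \<circ> j) s" using cy jin by simp
      show ?thesis using le LE_cong[OF c2x c2y] by (simp add: o_def)
    qed
    have "j m = n \<and> (\<forall>s \<in> {1..<m}. j s < n \<longrightarrow> {j s + 1..n} \<subseteq> j ` {s + 1..m})"
      using comb_nec[OF slo ab _ m pres] jr[OF iin] unfolding j_def by blast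
    then show "\<exists>i :: nat \<Rightarrow> nat. (\<forall>s \<in> {1..m}. i s \<in> {1..n}) \<and>
       (\<forall>x \<in> tuples A n. f x = (\<lambda>s \<in> {1..m}. x (i s))) \<and>
       (let j = (\<lambda>s. inv \<pi> (i (\<sigma> s))) in
          j m = n \<and>
          (\<forall>s \<in> {1..<m}. j s < n \<longrightarrow> {j s + 1..n} \<subseteq> j ` {s + 1..m}))"
      using iin fi unfolding j_def Let_def by blast
  next
    assume "\<exists>i :: nat \<Rightarrow> nat. (\<forall>s \<in> {1..m}. i s \<in> {1..n}) \<and>
       (\<forall>x \<in> tuples A n. f x = (\<lambda>s \<in> {1..m}. x (i s))) \<and>
       (let j = (\<lambda>s. inv \<pi> (i (\<sigma> s))) in
          j m = n \<and>
          (\<forall>s \<in> {1..<m}. j s < n \<longrightarrow> {j s + 1..n} \<subseteq> j ` {s + 1..m}))"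
    then obtain i where iin: "\<forall>s \<in> {1..m}. i s \<in> {1..n}"
      and fi: "\<forall>x \<in> tuples A n. f x = (\<lambda>s \<in> {1..m}. x (i s))"
      and jm: "inv \<pi> (i (\<sigma> m)) = n"
      and ii: "\<forall>s \<in> {1..<m}. inv \<pi> (i (\<sigma> s)) < n \<longrightarrow>
         {inv \<pi> (i (\<sigma> s)) + 1..n} \<subseteq> (\<lambda>s. inv \<pi> (i (\<sigma> s))) ` {s + 1..m}"
      unfolding Let_def by blast
    have H1: "\<forall>x \<in> tuples A n. f x \<in> tuples A m"
      using fi iin by (auto simp: PiE_iff)
    have H2: "\<forall>(k, g) \<in> ops. \<forall>xs. length xs = k \<and> set xs \<subseteq> tuples A n \<longrightarrow>
         f (power_op n g xs) = power_op m g (map f xs)"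
    proof -
      have "f (power_op n g xs) = power_op m g (map f xs)"
        if kg: "(k, g) \<in> ops" and len: "length xs = k" and xs: "set xs \<subseteq> tuples A n" for k g xs
      proof -
      have gA: "\<forall>ys. length ys = k \<and> set ys \<subseteq> A \<longrightarrow> g ys \<in> A"
        using alg kg unfolding is_algebra_def by blast
      have pin: "power_op n g xs \<in> tuples A n" using power_op_in[OF gA len xs] .
      have "f (power_op n g xs) = (\<lambda>s \<in> {1..m}. power_op n g xs (i s))" using fi pin by blast
      also have "\<dots> = power_op m g (map f xs)"
      proof (rule ext)
        fix s show "(\<lambda>s \<in> {1..m}. power_op n g xs (i s)) s = power_op m g (map f xs) s"
        proof (cases "s \<in> {1..m}")
          case True
          have mm: "map ((\<lambda>x. x s) \<circ> f) xs = map (\<lambda>x. x (i s)) xs"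
            using True fi xs by auto
          show ?thesis using True iin unfolding power_op_def by (simp add: mm)
        next
          case False then show ?thesis unfolding power_op_def by auto
        qed
      qed
      finally show "f (power_op n g xs) = power_op m g (map f xs)" .
    qed
    then show ?thesis by blast
    qed
    have H3: "\<forall>x \<in> tuples A n. \<forall>y \<in> tuples A n.
         antilex_le_perm r n \<pi> x y \<longrightarrow> antilex_le_perm r m \<sigma> (f x) (f y)"
    proof (intro ballI impI)
      fix x y assume x: "x \<in> tuples A n" and y: "y \<in> tuples A n"
        and le: "antilex_le_perm r n \<pi> x y"
      define j where "j = (\<lambda>s. inv \<pi> (i (\<sigma> s)))"
      have "LE r n (x \<circ> \<pi>) (y \<circ> \<pi>)" using le le_perm_iff[OF \<pi> x y] by (simp add: o_def)
      then have "LE r m (x \<circ> \<pi> \<circ> j) (y \<circ> \<pi> \<circ> j)"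
      proof (cases "antilex_less r n (x \<circ> \<pi>) (y \<circ> \<pi>)")
        case True
        show ?thesis using comb_suff[OF irr jr[OF iin, folded j_def] _ _ True] jm ii
          unfolding j_def by blast
      next
        case False
        then have eq: "\<forall>t\<in>{1..n}. (x \<circ> \<pi>) t = (y \<circ> \<pi>) t"
          using \<open>LE r n (x \<circ> \<pi>) (y \<circ> \<pi>)\<close> unfolding LE_def by blast
        have "\<forall>s\<in>{1..m}. (x \<circ> \<pi> \<circ> j) s = (y \<circ> \<pi> \<circ> j) s"
        proof
          fix s assume "s \<in> {1..m}"
          then have "j s \<in> {1..n}" using jr[OF iin] unfolding j_def by blast
          then show "(x \<circ> \<pi> \<circ> j) s = (y \<circ> \<pi> \<circ> j) s" using eq by simp
        qed
        then show ?thesis unfolding LE_def by blast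
      qed
      then show "antilex_le_perm r m \<sigma> (f x) (f y)"
        using fle_iff[OF \<pi> \<sigma> iin fi x y] unfolding j_def by simp
    qed
    show "is_hom A ops r n \<pi> m \<sigma> f" unfolding is_hom_def using H1 H2 H3 by blast
  qed
qed


end
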